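(* Let $\Omega\subset\mathbb{R}^N$ ($N=2$ or $3$) be a bounded connected domain with piecewise smooth boundary $\partial\Omega$ and outward unit normal $\mathbf{n}$, let $\nu>0$ and $\lambda>0$ be constants, and let $\mathbf{f}$, $\mathbf{g}$ be given smooth fields. Suppose $(\mathbf{u},p)$ is a sufficiently smooth (up to the boundary) solution on $\overline{\Omega}\times[0,T]$ of the pressure Poisson equation (PPE) reformulation \begin{align*} \mathbf{u}_t + (\mathbf{u}\cdot\nabla)\mathbf{u} &= \nu\Delta\mathbf{u}-\nabla p + \mathbf{f} && \text{in } \Omega\times(0,T],\\ \mathbf{n}\times\mathbf{u} &= \mathbf{n}\times\mathbf{g},\quad \nabla\cdot\mathbf{u}=0 && \text{on } \partial\Omega\times[0,T],\\ \Delta p &= \nabla\cdot\big(\mathbf{f}-(\mathbf{u}\cdot\nabla)\mathbf{u}\big) && \text{in } \Omega,\\ \frac{\partial p}{\partial \mathbf{n}} &= \mathbf{n}\cdot\big(\mathbf{f}-\mathbf{g}_t-\nu\nabla\times\nabla\times\mathbf{u}-(\mathbf{u}\cdot\nabla)\mathbf{u}\big)+\lambda\,\mathbf{n}\cdot(\mathbf{u}-\mathbf{g}) && \text{on } \partial\Omega. \end{align*} Then the divergence $\phi=\nabla\cdot\mathbf{u}$ satisfies the heat equation $\phi_t=\nu\Delta\phi$ in $\Omega\times(0,T]$ with homogeneous Dirichlet boundary condition $\phi=0$ on $\partial\Omega\times[0,T]$. Consequently, if $\nabla\cdot\mathbf{u}(\cdot,0)=0$ in $\Omega$, then $\nabla\cdot\mathbf{u}=0$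 in $\Omega\times[0,T]$.
   Context: The pressure equations are understood at each time $t\in[0,T]$. $\nabla\times\nabla\times$ denotes the curl of the curl (in 2D with the usual scalar/vector curl conventions). *)

theory Defs
  imports "HOL-Analysis.Analysis" "HOL-Analysis.Cross3"
begin

definition pdir :: "'a::real_normed_vector \<Rightarrow> ('a \<Rightarrow> 'b::real_normed_vector) \<Rightarrow> 'a \<Rightarrow> 'b" where
  "pdir v F z = vector_derivative (\<lambda>s. F (z + s *\<^sub>R v)) (at 0)"

primrec iterD :: "'a::real_normed_vector list \<Rightarrow> ('a \<Rightarrow> 'b::real_normed_vector) \<Rightarrow> 'a \<Rightarrow> 'b" where
  "iterD [] F = F"
| "iterD (v # vs) F = pdir v (iterD vs F)"

definition smooth_on :: "'a::euclidean_space set \<Rightarrow> ('a \<Rightarrow> 'b::real_normed_vector) \<Rightarrow> bool" where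
  "smooth_on S F \<longleftrightarrow> open S \<and>
     (\<forall>ds. set ds \<subseteq> Basis \<longrightarrow>
        continuous_on S (iterD ds F) \<and>
        (\<forall>v\<in>Basis. \<forall>z\<in>S. (\<lambda>s. iterD ds F (z + s *\<^sub>R v)) differentiable (at 0)))"

definition dx :: "'n::finite \<Rightarrow> ((real^'n) \<times> real \<Rightarrow> 'b::real_normed_vector) \<Rightarrow> (real^'n) \<times> real \<Rightarrow> 'b" where
  "dx i F z = pdir (axis i 1, 0) F z"

definition dt :: "((real^'n::finite) \<times> real \<Rightarrow> 'b::real_normed_vector) \<Rightarrow> (real^'n) \<times> real \<Rightarrow> 'b" where
  "dt F z = pdir (0, 1) F z"

definition divergence :: "((real^'n::finite) \<times> real \<Rightarrow> real^'n) \<Rightarrow> (real^'n) \<times> real \<Rightarrow> real" where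
  "divergence u z = (\<Sum>i\<in>UNIV. dx i (\<lambda>w. u w $ i) z)"

definition grad :: "((real^'n::finite) \<times> real \<Rightarrow> real) \<Rightarrow> (real^'n) \<times> real \<Rightarrow> real^'n" where
  "grad p z = (\<chi> i. dx i p z)"

definition laplacian :: "((real^'n::finite) \<times> real \<Rightarrow> 'b::real_normed_vector) \<Rightarrow> (real^'n) \<times> real \<Rightarrow> 'b" where
  "laplacian F z = (\<Sum>i\<in>UNIV. dx i (dx i F) z)"

definition convect :: "((real^'n::finite) \<times> real \<Rightarrow> real^'n) \<Rightarrow> (real^'n) \<times> real \<Rightarrow> real^'n" where
  "convect u z = (\<Sum>j\<in>UNIV. (u z $ j) *\<^sub>R dx j u z)"

definition curl3 :: "((real^3) \<times> real \<Rightarrow> real^3) \<Rightarrow> (real^3) \<times> real \<Rightarrow> real^3" where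
  "curl3 u z = vector
     [dx 2 (\<lambda>w. u w $ 3) z - dx 3 (\<lambda>w. u w $ 2) z,
      dx 3 (\<lambda>w. u w $ 1) z - dx 1 (\<lambda>w. u w $ 3) z,
      dx 1 (\<lambda>w. u w $ 2) z - dx 2 (\<lambda>w. u w $ 1) z]"

definition curlcurl3 :: "((real^3) \<times> real \<Rightarrow> real^3) \<Rightarrow> (real^3) \<times> real \<Rightarrow> real^3" where
  "curlcurl3 u = curl3 (curl3 u)"

definition curl2v :: "((real^2) \<times> real \<Rightarrow> real^2) \<Rightarrow> (real^2) \<times> real \<Rightarrow> real" where
  "curl2v u z = dx 1 (\<lambda>w. u w $ 2) z - dx 2 (\<lambda>w. u w $ 1) z"

definition curl2s :: "((real^2) \<times> real \<Rightarrow> real) \<Rightarrow> (real^2) \<times> real \<Rightarrow> real^2" where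
  "curl2s w z = vector [dx 2 w z, - dx 1 w z]"

definition curlcurl2 :: "((real^2) \<times> real \<Rightarrow> real^2) \<Rightarrow> (real^2) \<times> real \<Rightarrow> real^2" where
  "curlcurl2 u = curl2s (curl2v u)"

definition cross2 :: "real^2 \<Rightarrow> real^2 \<Rightarrow> real" where
  "cross2 a b = a $ 1 * b $ 2 - a $ 2 * b $ 1"

definition outward_normal :: "(real^'n::finite) set \<Rightarrow> real^'n \<Rightarrow> real^'n \<Rightarrow> bool" where
  "outward_normal \<Omega> x m \<longleftrightarrow> x \<in> frontier \<Omega> \<and>
     (\<exists>r>0. \<exists>psi :: real^'n \<Rightarrow> real. \<exists>G.
        smooth_on (ball x r) psi \<and>
        (psi has_derivative (\<lambda>h. G \<bullet> h)) (at x) \<and> G \<noteq> 0 \<and>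
        (\<forall>y\<in>ball x r. y \<in> \<Omega> \<longleftrightarrow> psi y < 0) \<and>
        (\<forall>y\<in>ball x r. y \<in> frontier \<Omega> \<longleftrightarrow> psi y = 0) \<and>
        m = (1 / norm G) *\<^sub>R G)"

definition regular_boundary :: "(real^'n::finite) set \<Rightarrow> (real^'n) set" where
  "regular_boundary \<Omega> = {x \<in> frontier \<Omega>. \<exists>m. outward_normal \<Omega> x m}"

text \<open>Piecewise smooth boundary (weak form): the smooth (regular) boundary points
  are dense in the boundary.\<close>
definition piecewise_smooth_boundary :: "(real^'n::finite) set \<Rightarrow> bool" where
  "piecewise_smooth_boundary \<Omega> \<longleftrightarrow> frontier \<Omega> \<subseteq> closure (regular_boundary \<Omega>)"

definition bounded_domain :: "(real^'n::finite) set \<Rightarrow> bool" where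
  "bounded_domain \<Omega> \<longleftrightarrow> open \<Omega> \<and> connected \<Omega> \<and> \<Omega> \<noteq> {} \<and> bounded \<Omega>"

text \<open>CC is the curl-curl operator, CR the cross product, for the dimension at hand.
  n is the outward unit normal field (meaningful on the regular boundary).\<close>
definition PPE_solution ::
  "(((real^'n::finite) \<times> real \<Rightarrow> real^'n) \<Rightarrow> (real^'n) \<times> real \<Rightarrow> real^'n) \<Rightarrow>
   (real^'n \<Rightarrow> real^'n \<Rightarrow> 'c) \<Rightarrow> (real^'n) set \<Rightarrow> real \<Rightarrow> real \<Rightarrow> real \<Rightarrow>
   ((real^'n) \<times> real \<Rightarrow> real^'n) \<Rightarrow> ((real^'n) \<times> real \<Rightarrow> real^'n) \<Rightarrow>
   (real^'n \<Rightarrow> real^'n) \<Rightarrow> ((real^'n) \<times> real \<Rightarrow> real^'n) \<Rightarrow> ((real^'n) \<times> real \<Rightarrow> real) \<Rightarrow> bool"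
  where
  "PPE_solution CC CR \<Omega> \<nu> lam T f g n u p \<longleftrightarrow>
     \<comment> \<open>momentum equation\<close>
     (\<forall>x\<in>\<Omega>. \<forall>t\<in>{0<..T}.
        dt u (x,t) + convect u (x,t) = \<nu> *\<^sub>R laplacian u (x,t) - grad p (x,t) + f (x,t)) \<and>
     \<comment> \<open>tangential boundary condition\<close>
     (\<forall>x\<in>regular_boundary \<Omega>. \<forall>t\<in>{0..T}. CR (n x) (u (x,t)) = CR (n x) (g (x,t))) \<and>
     \<comment> \<open>divergence boundary condition\<close>
     (\<forall>x\<in>frontier \<Omega>. \<forall>t\<in>{0..T}. divergence u (x,t) = 0) \<and>
     \<comment> \<open>pressure Poisson equation\<close>
     (\<forall>x\<in>\<Omega>. \<forall>t\<in>{0..T}.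
        laplacian p (x,t) = divergence (\<lambda>z. f z - convect u z) (x,t)) \<and>
     \<comment> \<open>pressure Neumann condition\<close>
     (\<forall>x\<in>regular_boundary \<Omega>. \<forall>t\<in>{0..T}.
        n x \<bullet> grad p (x,t) =
          n x \<bullet> (f (x,t) - dt g (x,t) - \<nu> *\<^sub>R CC u (x,t) - convect u (x,t))
          + lam * (n x \<bullet> (u (x,t) - g (x,t))))"

definition smooth_up_to_boundary :: "(real^'n::finite) set \<Rightarrow> real \<Rightarrow> ((real^'n) \<times> real \<Rightarrow> 'b::real_normed_vector) \<Rightarrow> bool" where
  "smooth_up_to_boundary \<Omega> T F \<longleftrightarrow> (\<exists>U. closure \<Omega> \<times> {0..T} \<subseteq> U \<and> smooth_on U F)"

definition PPE_setting where
  "PPE_setting CC CR \<Omega> \<nu> lam T f g n u p \<longleftrightarrow>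
     bounded_domain \<Omega> \<and> piecewise_smooth_boundary \<Omega> \<and>
     (\<forall>x\<in>regular_boundary \<Omega>. outward_normal \<Omega> x (n x)) \<and>
     \<nu> > 0 \<and> lam > 0 \<and>
     smooth_up_to_boundary \<Omega> T f \<and> smooth_up_to_boundary \<Omega> T g \<and>
     smooth_up_to_boundary \<Omega> T u \<and> smooth_up_to_boundary \<Omega> T p \<and>
     PPE_solution CC CR \<Omega> \<nu> lam T f g n u p"

definition divergence_conclusion where
  "divergence_conclusion \<Omega> \<nu> T u \<longleftrightarrow>
     (\<forall>x\<in>\<Omega>. \<forall>t\<in>{0<..T}.
        dt (divergence u) (x,t) = \<nu> * laplacian (divergence u) (x,t)) \<and>
     (\<forall>x\<in>frontier \<Omega>. \<forall>t\<in>{0..T}. divergence u (x,t) = 0) \<and>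
     ((\<forall>x\<in>\<Omega>. divergence u (x,0) = 0) \<longrightarrow>
        (\<forall>x\<in>\<Omega>. \<forall>t\<in>{0..T}. divergence u (x,t) = 0))"

end

theory Submission
  imports Defs
begin

lemma mvt':
  fixes f f' :: "real \<Rightarrow> real"
  assumes "a < b" "\<And>x. a \<le> x \<Longrightarrow> x \<le> b \<Longrightarrow> (f has_real_derivative f' x) (at x)"
  shows "\<exists>\<xi>. a < \<xi> \<and> \<xi> < b \<and> f b - f a = (b - a) * f' \<xi>"
proof -
  have "continuous_on {a..b} f"
    by (rule continuous_at_imp_continuous_on) (use assms(2) in \<open>meson DERIV_isCont atLeastAtMost_iff\<close>)
  moreover have "\<And>x. a < x \<Longrightarrow> x < b \<Longrightarrow> f differentiable at x"
    using assms real_differentiable_def by (meson less_imp_le)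
  ultimately obtain l z where "a < z" "z < b" "(f has_real_derivative l) (at z)" "f b - f a = (b - a) * l"
    using MVT[OF assms(1)] by blast
  moreover have "l = f' z" using DERIV_unique assms(2) calculation by (meson less_imp_le)
  ultimately show ?thesis by blast
qed

lemma pdir_eqI:
  fixes F :: "'a::real_normed_vector \<Rightarrow> real"
  assumes "((\<lambda>s. F (z + s *\<^sub>R v)) has_real_derivative D) (at 0)"
  shows "pdir v F z = D"
  using assms by (simp add: pdir_def has_real_derivative_iff_has_vector_derivative vector_derivative_at)

lemma pdir_cong_line:
  assumes "e > 0" "\<And>s. \<bar>s\<bar> < e \<Longrightarrow> F (z + s *\<^sub>R v) = G (z + s *\<^sub>R v)"
  shows "pdir v F z = pdir v G z"
proof -
  have "\<And>D. ((\<lambda>s. F (z + s *\<^sub>R v)) has_vector_derivative D) (at 0) \<longleftrightarrow>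
              ((\<lambda>s. G (z + s *\<^sub>R v)) has_vector_derivative D) (at 0)"
  proof
    fix D assume "((\<lambda>s. F (z + s *\<^sub>R v)) has_vector_derivative D) (at 0)"
    then show "((\<lambda>s. G (z + s *\<^sub>R v)) has_vector_derivative D) (at 0)"
      by (rule has_vector_derivative_transform_within[where S=UNIV, OF _ assms(1)]) (use assms(2) in auto)
  next
    fix D assume "((\<lambda>s. G (z + s *\<^sub>R v)) has_vector_derivative D) (at 0)"
    then show "((\<lambda>s. F (z + s *\<^sub>R v)) has_vector_derivative D) (at 0)"
      by (rule has_vector_derivative_transform_within[where S=UNIV, OF _ assms(1)]) (use assms(2) in auto)
  qed
  then show ?thesis by (simp add: pdir_def vector_derivative_def)
qed

lemma open_line:
  fixes z :: "'a::real_normed_vector"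
  assumes "open U" "z \<in> U"
  obtains e where "e > 0" "\<And>s. \<bar>s\<bar> < e \<Longrightarrow> z + s *\<^sub>R v \<in> U"
proof -
  obtain r where r: "r > 0" "ball z r \<subseteq> U" using assms open_contains_ball by blast
  define e where "e = r / (norm v + 1)"
  have np: "norm v + 1 > 0" by (simp add: add_nonneg_pos)
  have e: "e > 0" using r np by (simp add: e_def)
  have "z + s *\<^sub>R v \<in> U" if "\<bar>s\<bar> < e" for s
  proof -
    have "norm (s *\<^sub>R v) = \<bar>s\<bar> * norm v" by simp
    also have "\<dots> \<le> \<bar>s\<bar> * (norm v + 1)" by (simp add: mult_left_mono)
    also have "\<dots> < e * (norm v + 1)"
      using that np by (simp add: mult_strict_right_mono)
    also have "\<dots> = r" using np by (simp add: e_def)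
    finally show ?thesis using r by (auto simp: dist_norm)
  qed
  then show ?thesis using that e by blast
qed

lemma pdir_cong_open:
  assumes "open U" "z \<in> U" "\<And>w. w \<in> U \<Longrightarrow> F w = G w"
  shows "pdir v F z = pdir v G z"
proof -
  obtain e where "e > 0" "\<And>s. \<bar>s\<bar> < e \<Longrightarrow> z + s *\<^sub>R v \<in> U" using open_line assms by metis
  then show ?thesis using assms(3) by (intro pdir_cong_line[of e]) auto
qed

lemma line_deriv:
  fixes G :: "'a::real_normed_vector \<Rightarrow> real"
  assumes "\<forall>w\<in>U. (\<lambda>s. G (w + s *\<^sub>R v)) differentiable (at 0)" "z + s0 *\<^sub>R v \<in> U"
  shows "((\<lambda>s. G (z + s *\<^sub>R v)) has_real_derivative pdir v G (z + s0 *\<^sub>R v)) (at s0)"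
proof -
  have "((\<lambda>s. G ((z + s0 *\<^sub>R v) + s *\<^sub>R v)) has_real_derivative pdir v G (z + s0 *\<^sub>R v)) (at 0)"
    using assms by (simp add: pdir_def vector_derivative_works has_real_derivative_iff_has_vector_derivative)
  moreover have "(\<lambda>s. G ((z + s0 *\<^sub>R v) + s *\<^sub>R v)) = (\<lambda>s. G (z + (s + s0) *\<^sub>R v))"
    by (simp add: algebra_simps)
  ultimately show ?thesis using DERIV_shift[of "\<lambda>s. G (z + s *\<^sub>R v)" _ 0 s0] by simp
qed

lemma iterD_append: "iterD (ds @ [v]) F = iterD ds (pdir v F)"
  by (induction ds) auto

lemma smooth_pdir:
  assumes "smooth_on U F" "v \<in> Basis"
  shows "smooth_on U (pdir v F)"
proof -
  have h: "\<And>ds. set ds \<subseteq> Basis \<Longrightarrow> set (ds @ [v]) \<subseteq> Basis" using assms(2) by auto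
  show ?thesis using assms(1) h unfolding smooth_on_def iterD_append[symmetric] by blast
qed

lemma smooth_diff:
  assumes "smooth_on U F" "set ds \<subseteq> Basis" "v \<in> Basis"
  shows "\<forall>w\<in>U. (\<lambda>s. iterD ds F (w + s *\<^sub>R v)) differentiable (at 0)"
  using assms unfolding smooth_on_def by blast

lemma smooth_cont:
  assumes "smooth_on U F" "set ds \<subseteq> Basis"
  shows "continuous_on U (iterD ds F)"
  using assms unfolding smooth_on_def by blast

lemma hd:
  fixes F :: "'a::euclidean_space \<Rightarrow> real"
  assumes "smooth_on U F" "set ds \<subseteq> Basis" "v \<in> Basis" "z + s0 *\<^sub>R v \<in> U"
  shows "((\<lambda>s. iterD ds F (z + s *\<^sub>R v)) has_real_derivative iterD (v # ds) F (z + s0 *\<^sub>R v)) (at s0)"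
  using line_deriv[OF smooth_diff[OF assms(1-3)] assms(4)] by simp

lemma hd0:
  fixes F :: "'a::euclidean_space \<Rightarrow> real"
  assumes "smooth_on U F" "set ds \<subseteq> Basis" "v \<in> Basis" "z \<in> U"
  shows "((\<lambda>s. iterD ds F (z + s *\<^sub>R v)) has_real_derivative iterD (v # ds) F z) (at 0)"
  using hd[OF assms(1-3), of z 0] assms(4) by simp

lemma comp_deriv:
  fixes F :: "'a::euclidean_space \<Rightarrow> real^'n"
  assumes "smooth_on U F" "set ds \<subseteq> Basis" "v \<in> Basis" "w \<in> U"
  shows "((\<lambda>s. iterD ds F (w + s *\<^sub>R v) $ i) has_vector_derivative (pdir v (iterD ds F) w $ i)) (at 0)"
proof -
  have "(\<lambda>s. iterD ds F (w + s *\<^sub>R v)) differentiable (at 0)"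
    using smooth_diff[OF assms(1-3)] assms(4) by blast
  then have "((\<lambda>s. iterD ds F (w + s *\<^sub>R v)) has_vector_derivative pdir v (iterD ds F) w) (at 0)"
    by (simp add: pdir_def vector_derivative_works)
  from bounded_linear.has_vector_derivative[OF bounded_linear_vec_nth this]
  show ?thesis .
qed

lemma comp_iterD:
  fixes F :: "'a::euclidean_space \<Rightarrow> real^'n"
  assumes "smooth_on U F" "set ds \<subseteq> Basis" "w \<in> U"
  shows "iterD ds (\<lambda>w. F w $ i) w = iterD ds F w $ i"
  using assms(2,3)
proof (induction ds arbitrary: w)
  case Nil
  then show ?case by simp
next
  case (Cons v ds)
  have U: "open U" using assms(1) smooth_on_def by blast
  have IH: "\<And>w. w \<in> U \<Longrightarrow> iterD ds (\<lambda>w. F w $ i) w = iterD ds F w $ i"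
    using Cons by auto
  have "iterD (v # ds) (\<lambda>w. F w $ i) w = pdir v (iterD ds (\<lambda>w. F w $ i)) w" by simp
  also have "\<dots> = pdir v (\<lambda>w. iterD ds F w $ i) w"
    by (rule pdir_cong_open[OF U Cons.prems(2)]) (use IH in auto)
  also have "\<dots> = pdir v (iterD ds F) w $ i"
    apply (rule pdir_eqI)
    using comp_deriv[OF assms(1), of ds v w i] Cons.prems
    by (simp add: has_real_derivative_iff_has_vector_derivative)
  finally show ?case by simp
qed

lemma smooth_comp:
  fixes F :: "'a::euclidean_space \<Rightarrow> real^'n"
  assumes "smooth_on U F"
  shows "smooth_on U (\<lambda>w. F w $ i)"
proof -
  have U: "open U" using assms smooth_on_def by blast
  have "continuous_on U (iterD ds (\<lambda>w. F w $ i))" if "set ds \<subseteq> Basis" for ds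
  proof -
    have "continuous_on U (\<lambda>w. iterD ds F w $ i)"
      using continuous_on_component smooth_cont[OF assms that] by blast
    moreover have "continuous_on U (iterD ds (\<lambda>w. F w $ i)) = continuous_on U (\<lambda>w. iterD ds F w $ i)"
      by (rule continuous_on_cong) (auto simp: comp_iterD[OF assms that])
    ultimately show ?thesis by simp
  qed
  moreover have "(\<lambda>s. iterD ds (\<lambda>w. F w $ i) (z + s *\<^sub>R v)) differentiable (at 0)"
    if th: "set ds \<subseteq> Basis" "v \<in> Basis" "z \<in> U" for ds v z
  proof -
    obtain e where e: "e > 0" "\<And>s. \<bar>s\<bar> < e \<Longrightarrow> z + s *\<^sub>R v \<in> U" using open_line U th(3) by metis
    have "((\<lambda>s. iterD ds (\<lambda>w. F w $ i) (z + s *\<^sub>R v)) has_vector_derivative (pdir v (iterD ds F) z $ i)) (at 0)"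
      by (rule has_vector_derivative_transform_within[where S=UNIV, OF comp_deriv[OF assms th] e(1)])
         (use e(2) comp_iterD[OF assms th(1)] in auto)
    then show ?thesis by (rule differentiableI_vector)
  qed
  ultimately show ?thesis using U unfolding smooth_on_def by blast
qed

lemma dmvt:
  fixes F :: "'a::euclidean_space \<Rightarrow> real"
  assumes sm: "smooth_on U F" and ab: "a \<in> Basis" "b \<in> Basis" and h: "h > 0"
    and inU: "\<And>s t. 0 \<le> s \<Longrightarrow> s \<le> h \<Longrightarrow> 0 \<le> t \<Longrightarrow> t \<le> h \<Longrightarrow> z + s *\<^sub>R a + t *\<^sub>R b \<in> U"
  shows "\<exists>\<xi> \<eta>. 0 < \<xi> \<and> \<xi> < h \<and> 0 < \<eta> \<and> \<eta> < h \<and>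
     F (z + h *\<^sub>R a + h *\<^sub>R b) - F (z + h *\<^sub>R a) - F (z + h *\<^sub>R b) + F z
       = h * h * pdir b (pdir a F) (z + \<xi> *\<^sub>R a + \<eta> *\<^sub>R b)"
proof -
  define g where "g s = F ((z + h *\<^sub>R b) + s *\<^sub>R a) - F (z + s *\<^sub>R a)" for s
  have gd: "(g has_real_derivative (pdir a F ((z + h *\<^sub>R b) + s *\<^sub>R a) - pdir a F (z + s *\<^sub>R a))) (at s)"
    if "0 \<le> s" "s \<le> h" for s
  proof -
    have m1: "(z + h *\<^sub>R b) + s *\<^sub>R a \<in> U" using inU[of s h] that h by (simp add: algebra_simps)
    have m2: "z + s *\<^sub>R a \<in> U" using inU[of s 0] that h by simp
    show ?thesis unfolding g_def
      using DERIV_diff[OF hd[OF sm _ ab(1) m1, of "[]"] hd[OF sm _ ab(1) m2, of "[]"]] by simp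
  qed
  obtain \<xi> where xi: "0 < \<xi>" "\<xi> < h"
    "g h - g 0 = (h - 0) * (pdir a F ((z + h *\<^sub>R b) + \<xi> *\<^sub>R a) - pdir a F (z + \<xi> *\<^sub>R a))"
    using mvt'[OF h, of g "\<lambda>s. pdir a F ((z + h *\<^sub>R b) + s *\<^sub>R a) - pdir a F (z + s *\<^sub>R a)"] gd by blast
  define k where "k t = pdir a F ((z + \<xi> *\<^sub>R a) + t *\<^sub>R b)" for t
  have kd: "(k has_real_derivative pdir b (pdir a F) ((z + \<xi> *\<^sub>R a) + t *\<^sub>R b)) (at t)"
    if "0 \<le> t" "t \<le> h" for t
  proof -
    have m: "(z + \<xi> *\<^sub>R a) + t *\<^sub>R b \<in> U" using inU[of \<xi> t] that xi by simp
    show ?thesis unfolding k_def using hd[OF sm _ ab(2) m, of "[a]"] ab by simp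
  qed
  obtain \<eta> where eta: "0 < \<eta>" "\<eta> < h"
    "k h - k 0 = (h - 0) * pdir b (pdir a F) ((z + \<xi> *\<^sub>R a) + \<eta> *\<^sub>R b)"
    using mvt'[OF h, of k "\<lambda>t. pdir b (pdir a F) ((z + \<xi> *\<^sub>R a) + t *\<^sub>R b)"] kd by blast
  have "F (z + h *\<^sub>R a + h *\<^sub>R b) - F (z + h *\<^sub>R a) - F (z + h *\<^sub>R b) + F z = g h - g 0"
    by (simp add: g_def algebra_simps)
  also have "\<dots> = h * (k h - k 0)" using xi(3) by (simp add: k_def algebra_simps)
  also have "\<dots> = h * h * pdir b (pdir a F) (z + \<xi> *\<^sub>R a + \<eta> *\<^sub>R b)" using eta(3) by simp
  finally show ?thesis using xi eta by blast
qed

lemma schwarz: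
  fixes F :: "'a::euclidean_space \<Rightarrow> real"
  assumes sm: "smooth_on U F" and ab: "a \<in> Basis" "b \<in> Basis" and z: "z \<in> U"
  shows "pdir a (pdir b F) z = pdir b (pdir a F) z"
proof -
  define D1 where "D1 = pdir b (pdir a F)"
  define D2 where "D2 = pdir a (pdir b F)"
  have U: "open U" using sm smooth_on_def by blast
  have c1: "isCont D1 z"
    using smooth_cont[OF sm, of "[b,a]"] ab U z continuous_on_eq_continuous_at by (auto simp: D1_def)
  have c2: "isCont D2 z"
    using smooth_cont[OF sm, of "[a,b]"] ab U z continuous_on_eq_continuous_at by (auto simp: D2_def)
  obtain r where r: "r > 0" "ball z r \<subseteq> U" using U z open_contains_ball by blast
  have "\<bar>D1 z - D2 z\<bar> < 2 * \<epsilon>" if e: "\<epsilon> > 0" for \<epsilon>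
  proof -
    obtain d1 where d1: "d1 > 0" "\<And>x'. dist x' z < d1 \<Longrightarrow> dist (D1 x') (D1 z) < \<epsilon>"
      using c1 e continuous_at_eps_delta by metis
    obtain d2 where d2: "d2 > 0" "\<And>x'. dist x' z < d2 \<Longrightarrow> dist (D2 x') (D2 z) < \<epsilon>"
      using c2 e continuous_at_eps_delta by metis
    define h where "h = min r (min d1 d2) / 3"
    have h: "h > 0" using r d1 d2 by (simp add: h_def)
    have close: "dist (z + s *\<^sub>R c + t *\<^sub>R d) z < min r (min d1 d2)"
      if "0 \<le> s" "s \<le> h" "0 \<le> t" "t \<le> h" "c \<in> Basis" "d \<in> Basis" for s t c d
    proof -
      have "dist (z + s *\<^sub>R c + t *\<^sub>R d) z = norm (s *\<^sub>R c + t *\<^sub>R d)" by (simp add: dist_norm)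
      also have "\<dots> \<le> norm (s *\<^sub>R c) + norm (t *\<^sub>R d)" by (rule norm_triangle_ineq)
      also have "\<dots> = s + t" using that by (simp add: norm_Basis)
      also have "\<dots> < min r (min d1 d2)" using that h unfolding h_def by linarith
      finally show ?thesis .
    qed
    have inU: "z + s *\<^sub>R c + t *\<^sub>R d \<in> U"
      if "0 \<le> s" "s \<le> h" "0 \<le> t" "t \<le> h" "c \<in> Basis" "d \<in> Basis" for s t c d
      using close[OF that] r by (auto simp: dist_commute)
    obtain \<xi> \<eta> where p1: "0 < \<xi>" "\<xi> < h" "0 < \<eta>" "\<eta> < h"
      "F (z + h *\<^sub>R a + h *\<^sub>R b) - F (z + h *\<^sub>R a) - F (z + h *\<^sub>R b) + F z
       = h * h * D1 (z + \<xi> *\<^sub>R a + \<eta> *\<^sub>R b)"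
      using dmvt[OF sm ab h, of z] inU ab unfolding D1_def by blast
    obtain \<xi>' \<eta>' where p2: "0 < \<xi>'" "\<xi>' < h" "0 < \<eta>'" "\<eta>' < h"
      "F (z + h *\<^sub>R b + h *\<^sub>R a) - F (z + h *\<^sub>R b) - F (z + h *\<^sub>R a) + F z
       = h * h * D2 (z + \<xi>' *\<^sub>R b + \<eta>' *\<^sub>R a)"
      using dmvt[OF sm ab(2) ab(1) h, of z] inU ab unfolding D2_def by blast
    have pt: "z + h *\<^sub>R b + h *\<^sub>R a = z + h *\<^sub>R a + h *\<^sub>R b" by (simp add: algebra_simps)
    have "h * h * D1 (z + \<xi> *\<^sub>R a + \<eta> *\<^sub>R b) = h * h * D2 (z + \<xi>' *\<^sub>R b + \<eta>' *\<^sub>R a)"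
      using p1(5) p2(5) unfolding pt by linarith
    then have eq: "D1 (z + \<xi> *\<^sub>R a + \<eta> *\<^sub>R b) = D2 (z + \<xi>' *\<^sub>R b + \<eta>' *\<^sub>R a)" using h by simp
    have "dist (D1 (z + \<xi> *\<^sub>R a + \<eta> *\<^sub>R b)) (D1 z) < \<epsilon>"
      using d1(2) close[of \<xi> \<eta> a b] p1 ab by auto
    moreover have "dist (D2 (z + \<xi>' *\<^sub>R b + \<eta>' *\<^sub>R a)) (D2 z) < \<epsilon>"
      using d2(2) close[of \<xi>' \<eta>' b a] p2 ab by auto
    ultimately show ?thesis using eq by (simp add: dist_real_def)
  qed
  note key = this
  have "D1 z = D2 z"
  proof (rule ccontr)
    assume "D1 z \<noteq> D2 z"
    then have "\<bar>D1 z - D2 z\<bar> / 2 > 0" by simp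
    from key[OF this] show False by simp
  qed
  then show ?thesis by (simp add: D1_def D2_def)
qed

lemma max_principle:
  fixes \<psi> :: "(real^'n) \<times> real \<Rightarrow> real" and \<Omega> :: "(real^'n) set"
  assumes op: "open \<Omega>" and bd: "bounded \<Omega>" and nu: "\<nu> > 0"
    and cont: "continuous_on (closure \<Omega> \<times> {0..T}) \<psi>"
    and bdry: "\<forall>x\<in>frontier \<Omega>. \<forall>t\<in>{0..T}. \<psi> (x,t) \<le> 0"
    and init: "\<forall>x\<in>\<Omega>. \<psi> (x,0) \<le> 0"
    and pde: "\<forall>x\<in>\<Omega>. \<forall>t\<in>{0<..T}. \<exists>Dt Dx. ((\<lambda>s. \<psi> (x, t + s)) has_real_derivative Dt) (at 0) \<and>
               Dt = \<nu> * (\<Sum>i\<in>UNIV. Dx i) \<and>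
               (\<forall>i. \<exists>G e. e > 0 \<and> (\<forall>s. \<bar>s\<bar> < e \<longrightarrow>
                   ((\<lambda>r. \<psi> (x + r *\<^sub>R axis i 1, t)) has_real_derivative G s) (at s)) \<and>
                   (G has_real_derivative Dx i) (at 0))"
  shows "\<forall>x\<in>\<Omega>. \<forall>t\<in>{0..T}. \<psi> (x,t) \<le> 0"
proof (rule ccontr)
  assume "\<not> ?thesis"
  then obtain x1 t1 where x1: "x1 \<in> \<Omega>" "t1 \<in> {0..T}" "\<psi> (x1,t1) > 0" by force
  define \<epsilon> where "\<epsilon> = \<psi> (x1,t1) / (2 * (T + 1))"
  have T: "T \<ge> 0" using x1 by auto
  have eps: "\<epsilon> > 0" using x1 T by (simp add: \<epsilon>_def)
  have et1: "\<epsilon> * t1 \<le> \<psi> (x1,t1) / 2"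
  proof -
    have "\<epsilon> * t1 \<le> \<epsilon> * (T + 1)" using eps x1 by (intro mult_left_mono) auto
    also have "\<dots> = \<psi> (x1,t1) / 2" using T by (simp add: \<epsilon>_def field_simps)
    finally show ?thesis .
  qed
  define K where "K = closure \<Omega> \<times> {0..T}"
  define v where "v w = \<psi> w - \<epsilon> * snd w" for w
  have Kc: "compact K" unfolding K_def using bd by (intro compact_Times) (auto simp: compact_closure)
  have Kne: "K \<noteq> {}" unfolding K_def using x1 closure_subset by auto
  have vc: "continuous_on K v" unfolding v_def K_def
    by (intro continuous_intros cont)
  obtain w0 where w0: "w0 \<in> K" "\<forall>y\<in>K. v y \<le> v w0" using continuous_attains_sup[OF Kc Kne vc] by blast
  obtain x0 t0 where w0e: "w0 = (x0,t0)" by (cases w0)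
  have x1K: "(x1,t1) \<in> K" using x1 closure_subset unfolding K_def by auto
  have vpos: "v (x0,t0) > 0"
  proof -
    have "v (x1,t1) > 0" using et1 x1 by (simp add: v_def)
    then show ?thesis using w0 x1K w0e by force
  qed
  have t0: "t0 \<in> {0..T}" and x0c: "x0 \<in> closure \<Omega>" using w0 w0e K_def by auto
  have x0: "x0 \<in> \<Omega>"
  proof (rule ccontr)
    assume "x0 \<notin> \<Omega>"
    then have "x0 \<in> frontier \<Omega>" using x0c op by (simp add: frontier_def interior_open)
    then have "\<psi> (x0,t0) \<le> 0" using bdry t0 by blast
    then show False using vpos t0 eps by (simp add: v_def) (smt (verit) mult_nonneg_nonneg)
  qed
  have t0pos: "t0 > 0"
  proof (rule ccontr)
    assume "\<not> t0 > 0"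
    then have "t0 = 0" using t0 by simp
    then show False using init x0 vpos by (simp add: v_def) (smt (verit))
  qed
  have vmax: "\<And>y. y \<in> K \<Longrightarrow> v y \<le> v (x0,t0)" using w0 w0e by blast
  obtain Dt Dx where Dt: "((\<lambda>s. \<psi> (x0, t0 + s)) has_real_derivative Dt) (at 0)"
    and Deq: "Dt = \<nu> * (\<Sum>i\<in>UNIV. Dx i)"
    and Dxi: "\<And>i. \<exists>G e. e > 0 \<and> (\<forall>s. \<bar>s\<bar> < e \<longrightarrow>
                   ((\<lambda>r. \<psi> (x0 + r *\<^sub>R axis i 1, t0)) has_real_derivative G s) (at s)) \<and>
                   (G has_real_derivative Dx i) (at 0)"
    using pde x0 t0 t0pos by fastforce
  have Dtge: "Dt \<ge> \<epsilon>"
  proof (rule ccontr)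
    assume "\<not> Dt \<ge> \<epsilon>"
    then have neg: "Dt - \<epsilon> < 0" by simp
    have "((\<lambda>s. \<psi> (x0, t0 + s) - \<epsilon> * s) has_real_derivative Dt - \<epsilon>) (at 0)"
      using DERIV_diff[OF Dt DERIV_cmult_Id[of \<epsilon>]] by simp
    from DERIV_neg_dec_left[OF this neg] obtain d where d: "d > 0"
      "\<And>h. h > 0 \<Longrightarrow> h < d \<Longrightarrow> \<psi> (x0, t0 + 0) - \<epsilon> * 0 < \<psi> (x0, t0 + (0 - h)) - \<epsilon> * (0 - h)"
      by blast
    define h where "h = min d t0 / 2"
    have h: "h > 0" "h < d" "h \<le> t0" using d t0pos by (auto simp: h_def)
    have "(x0, t0 - h) \<in> K" using x0 closure_subset h t0 by (auto simp: K_def)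
    from vmax[OF this] have "\<psi> (x0, t0 - h) - \<epsilon> * (t0 - h) \<le> \<psi> (x0, t0) - \<epsilon> * t0" by (simp add: v_def)
    moreover have "\<psi> (x0, t0) < \<psi> (x0, t0 - h) + \<epsilon> * h" using d(2)[OF h(1,2)] by simp
    ultimately show False by (simp add: algebra_simps)
  qed
  obtain r where r: "r > 0" "ball x0 r \<subseteq> \<Omega>" using op x0 open_contains_ball by blast
  have Dxle: "Dx i \<le> 0" for i
  proof (rule ccontr)
    assume "\<not> Dx i \<le> 0"
    then have pos: "Dx i > 0" by simp
    obtain G e where e: "e > 0" and Gd: "\<And>s. \<bar>s\<bar> < e \<Longrightarrow>
                   ((\<lambda>r. \<psi> (x0 + r *\<^sub>R axis i 1, t0)) has_real_derivative G s) (at s)"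
      and GD: "(G has_real_derivative Dx i) (at 0)" using Dxi by blast
    define e' where "e' = min e r"
    have e': "e' > 0" using e r by (simp add: e'_def)
    define g where "g = (\<lambda>q. \<psi> (x0 + q *\<^sub>R axis i 1, t0))"
    have gle: "g s \<le> g 0" if "\<bar>s\<bar> < e'" for s
    proof -
      have "x0 + s *\<^sub>R axis i 1 \<in> ball x0 r" using that by (simp add: e'_def dist_norm)
      then have "x0 + s *\<^sub>R axis i 1 \<in> closure \<Omega>" using r closure_subset by blast
      then have "(x0 + s *\<^sub>R axis i 1, t0) \<in> K" using t0 by (auto simp: K_def)
      from vmax[OF this] show ?thesis by (simp add: v_def g_def)
    qed
    have gd: "(g has_real_derivative G s) (at s)" if "\<bar>s\<bar> < e'" for s
      using Gd[of s] that by (simp add: g_def e'_def)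
    have G0: "G 0 = 0"
      using DERIV_local_max[OF gd[of 0] e'] gle e' by (simp add: abs_minus_commute)
    obtain d where d: "d > 0" "\<And>h. h > 0 \<Longrightarrow> h < d \<Longrightarrow> G 0 < G (0 + h)"
      using DERIV_pos_inc_right[OF GD pos] by blast
    define h where "h = min d e' / 2"
    have h: "h > 0" "h < d" "h < e'" using d e' by (auto simp: h_def)
    obtain \<xi> where xi: "0 < \<xi>" "\<xi> < h" "g h - g 0 = (h - 0) * G \<xi>"
      using mvt'[OF h(1), of g G] gd h by force
    have "G \<xi> > 0" using d(2)[of \<xi>] xi h G0 by simp
    then have "g h > g 0" using xi h by (simp add: algebra_simps)
    moreover have "g h \<le> g 0" using gle[of h] h by simp
    ultimately show False by simp
  qed
  have "Dt \<le> 0" using Deq nu Dxle by (simp add: mult_nonneg_nonpos sum_nonpos)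
  then show False using Dtge eps by simp
qed

lemma smooth_mono:
  assumes "smooth_on U F" "open V" "V \<subseteq> U"
  shows "smooth_on V F"
  using assms unfolding smooth_on_def by (meson continuous_on_subset subsetD)

lemma hdp:
  fixes F :: "'a::euclidean_space \<Rightarrow> real"
  assumes "smooth_on U F" "v \<in> Basis" "z \<in> U"
  shows "((\<lambda>s. F (z + s *\<^sub>R v)) has_real_derivative pdir v F z) (at 0)"
  using hd0[OF assms(1) _ assms(2,3), of "[]"] by simp

lemma hdps:
  fixes F :: "'a::euclidean_space \<Rightarrow> real"
  assumes "smooth_on U F" "v \<in> Basis" "z + s0 *\<^sub>R v \<in> U"
  shows "((\<lambda>s. F (z + s *\<^sub>R v)) has_real_derivative pdir v F (z + s0 *\<^sub>R v)) (at s0)"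
  using hd[OF assms(1) _ assms(2,3), of "[]"] by simp

lemma dx_eq: "dx i F = pdir (axis i 1, 0) F"
  by (rule ext) (simp add: dx_def)

lemma dt_eq: "dt F = pdir (0, 1) F"
  by (rule ext) (simp add: dt_def)

lemma eX_Basis: "((axis i (1::real), 0::real) :: (real^'n) \<times> real) \<in> Basis"
  by (auto simp add: Basis_prod_def Basis_vec_def)

lemma eT_Basis: "((0::real^'n), 1::real) \<in> Basis"
  by (simp add: Basis_prod_def)

lemma main_generic:
  fixes \<Omega> :: "(real^'n) set"
  assumes A: "PPE_setting CC CR \<Omega> \<nu> lam T f g n u p"
  shows "divergence_conclusion \<Omega> \<nu> T u"
proof -
  define eX :: "'n \<Rightarrow> (real^'n) \<times> real" where "eX i = (axis i 1, 0)" for i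
  define eT :: "(real^'n) \<times> real" where "eT = (0, 1)"
  have eXB: "eX i \<in> Basis" for i unfolding eX_def by (rule eX_Basis)
  have eTB: "eT \<in> Basis" unfolding eT_def by (rule eT_Basis)
  have op: "open \<Omega>" and bd: "bounded \<Omega>" and nu: "\<nu> > 0"
    using A unfolding PPE_setting_def bounded_domain_def by auto
  obtain U1 where U1: "closure \<Omega> \<times> {0..T} \<subseteq> U1" "smooth_on U1 u"
    using A unfolding PPE_setting_def smooth_up_to_boundary_def by blast
  obtain U2 where U2: "closure \<Omega> \<times> {0..T} \<subseteq> U2" "smooth_on U2 p"
    using A unfolding PPE_setting_def smooth_up_to_boundary_def by blast
  define U where "U = U1 \<inter> U2"
  have oU: "open U" using U1 U2 unfolding U_def smooth_on_def by blast
  have KU: "closure \<Omega> \<times> {0..T} \<subseteq> U" using U1 U2 unfolding U_def by blast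
  have su: "smooth_on U u" using smooth_mono[OF U1(2) oU] U_def by blast
  have sp: "smooth_on U p" using smooth_mono[OF U2(2) oU] U_def by blast
  define uk where "uk k = (\<lambda>w. u w $ k)" for k
  have suk: "smooth_on U (uk k)" for k unfolding uk_def by (rule smooth_comp[OF su])
  have PPE: "PPE_solution CC CR \<Omega> \<nu> lam T f g n u p" using A unfolding PPE_setting_def by blast
  have mom: "\<And>x t. x \<in> \<Omega> \<Longrightarrow> t \<in> {0<..T} \<Longrightarrow>
        dt u (x,t) + convect u (x,t) = \<nu> *\<^sub>R laplacian u (x,t) - grad p (x,t) + f (x,t)"
    using PPE unfolding PPE_solution_def by blast
  have bdry: "\<forall>x\<in>frontier \<Omega>. \<forall>t\<in>{0..T}. divergence u (x,t) = 0"
    using PPE unfolding PPE_solution_def by blast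
  have ppe: "\<And>x t. x \<in> \<Omega> \<Longrightarrow> t \<in> {0..T} \<Longrightarrow>
        laplacian p (x,t) = divergence (\<lambda>z. f z - convect u z) (x,t)"
    using PPE unfolding PPE_solution_def by blast
  have cA: "dt u w $ k = pdir eT (uk k) w" if "w \<in> U" for w k
    using comp_iterD[OF su, of "[eT]" w k] that eTB by (simp add: dt_eq eT_def uk_def)
  have cB: "laplacian u w $ k = (\<Sum>j\<in>UNIV. pdir (eX j) (pdir (eX j) (uk k)) w)" if "w \<in> U" for w k
  proof -
    have "laplacian u w $ k = (\<Sum>j\<in>UNIV. pdir (eX j) (pdir (eX j) u) w $ k)"
      by (simp add: laplacian_def sum_component dx_eq eX_def)
    also have "\<dots> = (\<Sum>j\<in>UNIV. pdir (eX j) (pdir (eX j) (uk k)) w)"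
      using comp_iterD[OF su, of "[eX j, eX j]" w k for j] that eXB by (simp add: uk_def)
    finally show ?thesis .
  qed
  have cC: "grad p w $ k = pdir (eX k) p w" for w k
    by (simp add: grad_def dx_eq eX_def)
  have divu: "divergence u = (\<lambda>w. \<Sum>k\<in>UNIV. pdir (eX k) (uk k) w)"
    by (rule ext) (simp add: divergence_def dx_eq eX_def uk_def)
  have sk: "smooth_on U (pdir (eX k) (uk k))" for k by (rule smooth_pdir[OF suk eXB])
  have zU: "(x,t) \<in> U" if "x \<in> \<Omega>" "t \<in> {0..T}" for x t
    using KU that closure_subset by blast
  have heat: "(\<Sum>k\<in>UNIV. pdir eT (pdir (eX k) (uk k)) (x,t)) =
      \<nu> * (\<Sum>i\<in>UNIV. \<Sum>k\<in>UNIV. pdir (eX i) (pdir (eX i) (pdir (eX k) (uk k))) (x,t))"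
    if x: "x \<in> \<Omega>" and t: "t \<in> {0<..T}" for x t
  proof -
    define z where "z = (x,t)"
    have z: "z \<in> U" using zU x t by (auto simp: z_def)
    have step1: "pdir (eX i) (\<lambda>w. (f w - convect u w) $ i) z =
        pdir (eX i) (pdir eT (uk i)) z
        - \<nu> * (\<Sum>j\<in>UNIV. pdir (eX i) (pdir (eX j) (pdir (eX j) (uk i))) z)
        + pdir (eX i) (pdir (eX i) p) z" for i
    proof -
      obtain e where e: "e > 0" "\<And>s. \<bar>s\<bar> < e \<Longrightarrow> x + s *\<^sub>R axis i 1 \<in> \<Omega>"
        using open_line[OF op x] by metis
      have "pdir (eX i) (\<lambda>w. (f w - convect u w) $ i) z =
            pdir (eX i) (\<lambda>w. pdir eT (uk i) w - \<nu> * (\<Sum>j\<in>UNIV. pdir (eX j) (pdir (eX j) (uk i)) w)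
                              + pdir (eX i) p w) z"
      proof (rule pdir_cong_line[OF e(1)])
        fix s :: real assume "\<bar>s\<bar> < e"
        then have y: "x + s *\<^sub>R axis i 1 \<in> \<Omega>" by (rule e(2))
        define w where "w = (x + s *\<^sub>R axis i 1, t)"
        have wU: "w \<in> U" using zU[OF y] t by (auto simp: w_def)
        have zw: "z + s *\<^sub>R eX i = w" by (simp add: z_def w_def eX_def)
        from mom[OF y t] have "(dt u w + convect u w) $ i = (\<nu> *\<^sub>R laplacian u w - grad p w + f w) $ i"
          by (simp add: w_def)
        then have "dt u w $ i + convect u w $ i = \<nu> * laplacian u w $ i - grad p w $ i + f w $ i"
          by simp
        then show "(f (z + s *\<^sub>R eX i) - convect u (z + s *\<^sub>R eX i)) $ i =
          pdir eT (uk i) (z + s *\<^sub>R eX i) - \<nu> * (\<Sum>j\<in>UNIV. pdir (eX j) (pdir (eX j) (uk i)) (z + s *\<^sub>R eX i))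
          + pdir (eX i) p (z + s *\<^sub>R eX i)"
          unfolding zw using cA[OF wU, of i] cB[OF wU, of i] cC[of w i] by simp
      qed
      also have "\<dots> = pdir (eX i) (pdir eT (uk i)) z
        - \<nu> * (\<Sum>j\<in>UNIV. pdir (eX i) (pdir (eX j) (pdir (eX j) (uk i))) z)
        + pdir (eX i) (pdir (eX i) p) z"
      proof (rule pdir_eqI)
        have d1: "((\<lambda>s. pdir eT (uk i) (z + s *\<^sub>R eX i)) has_real_derivative pdir (eX i) (pdir eT (uk i)) z) (at 0)"
          by (rule hdp[OF smooth_pdir[OF suk eTB] eXB z])
        have d2: "((\<lambda>s. \<Sum>j\<in>UNIV. pdir (eX j) (pdir (eX j) (uk i)) (z + s *\<^sub>R eX i)) has_real_derivative
                   (\<Sum>j\<in>UNIV. pdir (eX i) (pdir (eX j) (pdir (eX j) (uk i))) z)) (at 0)"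
          by (rule DERIV_sum) (rule hdp[OF smooth_pdir[OF smooth_pdir[OF suk eXB] eXB] eXB z])
        have d3: "((\<lambda>s. pdir (eX i) p (z + s *\<^sub>R eX i)) has_real_derivative pdir (eX i) (pdir (eX i) p) z) (at 0)"
          by (rule hdp[OF smooth_pdir[OF sp eXB] eXB z])
        show "((\<lambda>s. pdir eT (uk i) (z + s *\<^sub>R eX i) - \<nu> * (\<Sum>j\<in>UNIV. pdir (eX j) (pdir (eX j) (uk i)) (z + s *\<^sub>R eX i))
                              + pdir (eX i) p (z + s *\<^sub>R eX i)) has_real_derivative
            pdir (eX i) (pdir eT (uk i)) z
            - \<nu> * (\<Sum>j\<in>UNIV. pdir (eX i) (pdir (eX j) (pdir (eX j) (uk i))) z)
            + pdir (eX i) (pdir (eX i) p) z) (at 0)"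
          by (rule DERIV_add[OF DERIV_diff[OF d1 DERIV_cmult[OF d2]] d3])
      qed
      finally show ?thesis .
    qed
    have "laplacian p z = (\<Sum>i\<in>UNIV. pdir (eX i) (pdir (eX i) p) z)"
      by (simp add: laplacian_def dx_eq eX_def)
    moreover have "divergence (\<lambda>z. f z - convect u z) z = (\<Sum>i\<in>UNIV. pdir (eX i) (\<lambda>w. (f w - convect u w) $ i) z)"
      by (simp add: divergence_def dx_eq eX_def)
    moreover have "laplacian p z = divergence (\<lambda>z. f z - convect u z) z"
      using ppe[OF x] t by (auto simp: z_def)
    ultimately have "(\<Sum>i\<in>UNIV. pdir (eX i) (pdir (eX i) p) z) =
       (\<Sum>i\<in>UNIV. pdir (eX i) (pdir eT (uk i)) z
        - \<nu> * (\<Sum>j\<in>UNIV. pdir (eX i) (pdir (eX j) (pdir (eX j) (uk i))) z)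
        + pdir (eX i) (pdir (eX i) p) z)" using step1 by simp
    then have heat1: "(\<Sum>i\<in>UNIV. pdir (eX i) (pdir eT (uk i)) z) =
       \<nu> * (\<Sum>i\<in>UNIV. \<Sum>j\<in>UNIV. pdir (eX i) (pdir (eX j) (pdir (eX j) (uk i))) z)"
      by (simp add: sum.distrib sum_subtractf sum_distrib_left)
    have c1: "pdir eT (pdir (eX k) (uk k)) z = pdir (eX k) (pdir eT (uk k)) z" for k
      by (rule schwarz[OF suk eTB eXB z])
    have c2: "pdir (eX i) (pdir (eX i) (pdir (eX k) (uk k))) z = pdir (eX k) (pdir (eX i) (pdir (eX i) (uk k))) z" for i k
    proof -
      have "pdir (eX i) (pdir (eX i) (pdir (eX k) (uk k))) z = pdir (eX i) (pdir (eX k) (pdir (eX i) (uk k))) z"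
        by (rule pdir_cong_open[OF oU z]) (rule schwarz[OF suk eXB eXB])
      also have "\<dots> = pdir (eX k) (pdir (eX i) (pdir (eX i) (uk k))) z"
        by (rule schwarz[OF smooth_pdir[OF suk eXB] eXB eXB z])
      finally show ?thesis .
    qed
    have "(\<Sum>k\<in>UNIV. pdir eT (pdir (eX k) (uk k)) z) = (\<Sum>i\<in>UNIV. pdir (eX i) (pdir eT (uk i)) z)"
      using c1 by simp
    also have "\<dots> = \<nu> * (\<Sum>i\<in>UNIV. \<Sum>j\<in>UNIV. pdir (eX i) (pdir (eX j) (pdir (eX j) (uk i))) z)" by (rule heat1)
    also have "(\<Sum>i\<in>UNIV. \<Sum>j\<in>UNIV. pdir (eX i) (pdir (eX j) (pdir (eX j) (uk i))) z)
       = (\<Sum>j\<in>UNIV. \<Sum>i\<in>UNIV. pdir (eX i) (pdir (eX j) (pdir (eX j) (uk i))) z)" by (rule sum.swap)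
    also have "\<dots> = (\<Sum>j\<in>UNIV. \<Sum>i\<in>UNIV. pdir (eX j) (pdir (eX j) (pdir (eX i) (uk i))) z)"
      by (intro sum.cong refl) (rule c2[symmetric])
    finally show ?thesis by (simp add: z_def)
  qed
  define \<phi> where "\<phi> = divergence u"
  have \<phi>e: "\<phi> = (\<lambda>w. \<Sum>k\<in>UNIV. pdir (eX k) (uk k) w)" using divu by (simp add: \<phi>_def)
  have dt\<phi>: "((\<lambda>s. \<phi> (z + s *\<^sub>R eT)) has_real_derivative (\<Sum>k\<in>UNIV. pdir eT (pdir (eX k) (uk k)) z)) (at 0)"
    if "z \<in> U" for z
    unfolding \<phi>e by (rule DERIV_sum) (rule hdp[OF sk eTB that])
  have dx\<phi>: "((\<lambda>r. \<phi> (z + r *\<^sub>R eX i)) has_real_derivative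
       (\<Sum>k\<in>UNIV. pdir (eX i) (pdir (eX k) (uk k)) (z + s *\<^sub>R eX i))) (at s)"
    if "z + s *\<^sub>R eX i \<in> U" for z s i
    unfolding \<phi>e by (rule DERIV_sum) (rule hdps[OF sk eXB that])
  have G\<phi>: "((\<lambda>s. \<Sum>k\<in>UNIV. pdir (eX i) (pdir (eX k) (uk k)) (z + s *\<^sub>R eX i)) has_real_derivative
       (\<Sum>k\<in>UNIV. pdir (eX i) (pdir (eX i) (pdir (eX k) (uk k))) z)) (at 0)"
    if "z \<in> U" for z i
    by (rule DERIV_sum) (rule hdp[OF smooth_pdir[OF sk eXB] eXB that])
  have c1: "dt (divergence u) (x,t) = \<nu> * laplacian (divergence u) (x,t)"
    if x: "x \<in> \<Omega>" and t: "t \<in> {0<..T}" for x t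
  proof -
    have z: "(x,t) \<in> U" using zU x t by auto
    have "dt (divergence u) (x,t) = (\<Sum>k\<in>UNIV. pdir eT (pdir (eX k) (uk k)) (x,t))"
      unfolding dt_eq \<phi>_def[symmetric] eT_def[symmetric] by (rule pdir_eqI[OF dt\<phi>[OF z]])
    moreover have "laplacian (divergence u) (x,t) =
        (\<Sum>i\<in>UNIV. \<Sum>k\<in>UNIV. pdir (eX i) (pdir (eX i) (pdir (eX k) (uk k))) (x,t))"
    proof -
      have in1: "pdir (eX i) \<phi> w = (\<Sum>k\<in>UNIV. pdir (eX i) (pdir (eX k) (uk k)) w)" if "w \<in> U" for w i
        by (rule pdir_eqI) (use dx\<phi>[of w 0 i] that in simp)
      have "pdir (eX i) (pdir (eX i) \<phi>) (x,t) = pdir (eX i) (\<lambda>w. \<Sum>k\<in>UNIV. pdir (eX i) (pdir (eX k) (uk k)) w) (x,t)" for i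
        by (rule pdir_cong_open[OF oU z]) (rule in1)
      also have "\<dots> i = (\<Sum>k\<in>UNIV. pdir (eX i) (pdir (eX i) (pdir (eX k) (uk k))) (x,t))" for i
        by (rule pdir_eqI[OF G\<phi>[OF z]])
      finally have "pdir (eX i) (pdir (eX i) \<phi>) (x,t) = (\<Sum>k\<in>UNIV. pdir (eX i) (pdir (eX i) (pdir (eX k) (uk k))) (x,t))" for i .
      then show ?thesis by (simp add: laplacian_def dx_eq eX_def[symmetric] \<phi>_def[symmetric])
    qed
    ultimately show ?thesis using heat[OF x t] by simp
  qed
  have pdeD: "\<exists>Dt Dx. ((\<lambda>s. \<phi> (x, t + s)) has_real_derivative Dt) (at 0) \<and>
               Dt = \<nu> * (\<Sum>i\<in>UNIV. Dx i) \<and>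
               (\<forall>i. \<exists>G e. e > 0 \<and> (\<forall>s. \<bar>s\<bar> < e \<longrightarrow>
                   ((\<lambda>r. \<phi> (x + r *\<^sub>R axis i 1, t)) has_real_derivative G s) (at s)) \<and>
                   (G has_real_derivative Dx i) (at 0))"
    if x: "x \<in> \<Omega>" and t: "t \<in> {0<..T}" for x t
  proof -
    have z: "(x,t) \<in> U" using zU x t by auto
    have D1: "((\<lambda>s. \<phi> (x, t + s)) has_real_derivative (\<Sum>k\<in>UNIV. pdir eT (pdir (eX k) (uk k)) (x,t))) (at 0)"
      using dt\<phi>[OF z] by (simp add: eT_def)
    have D3: "\<exists>G e. e > 0 \<and> (\<forall>s. \<bar>s\<bar> < e \<longrightarrow>
                   ((\<lambda>r. \<phi> (x + r *\<^sub>R axis i 1, t)) has_real_derivative G s) (at s)) \<and>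
                   (G has_real_derivative (\<Sum>k\<in>UNIV. pdir (eX i) (pdir (eX i) (pdir (eX k) (uk k))) (x,t))) (at 0)" for i
    proof -
      obtain e where e: "e > 0" "\<And>s. \<bar>s\<bar> < e \<Longrightarrow> x + s *\<^sub>R axis i 1 \<in> \<Omega>"
        using open_line[OF op x] by metis
      have "\<forall>s. \<bar>s\<bar> < e \<longrightarrow> ((\<lambda>r. \<phi> (x + r *\<^sub>R axis i 1, t)) has_real_derivative
          (\<Sum>k\<in>UNIV. pdir (eX i) (pdir (eX k) (uk k)) ((x,t) + s *\<^sub>R eX i))) (at s)"
      proof (intro allI impI)
        fix s :: real assume "\<bar>s\<bar> < e"
        then have "(x,t) + s *\<^sub>R eX i \<in> U" using zU[OF e(2)] t by (auto simp: eX_def)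
        from dx\<phi>[OF this] show "((\<lambda>r. \<phi> (x + r *\<^sub>R axis i 1, t)) has_real_derivative
          (\<Sum>k\<in>UNIV. pdir (eX i) (pdir (eX k) (uk k)) ((x,t) + s *\<^sub>R eX i))) (at s)"
          by (simp add: eX_def)
      qed
      then show ?thesis using e(1) G\<phi>[OF z, of i]
        by (intro exI[of _ "\<lambda>s. \<Sum>k\<in>UNIV. pdir (eX i) (pdir (eX k) (uk k)) ((x,t) + s *\<^sub>R eX i)"] exI[of _ e]) simp
    qed
    show ?thesis
      apply (rule exI[of _ "\<Sum>k\<in>UNIV. pdir eT (pdir (eX k) (uk k)) (x,t)"])
      apply (rule exI[of _ "\<lambda>i. \<Sum>k\<in>UNIV. pdir (eX i) (pdir (eX i) (pdir (eX k) (uk k))) (x,t)"])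
      using D1 D3 heat[OF x t] by simp
  qed
  have cont\<phi>: "continuous_on (closure \<Omega> \<times> {0..T}) \<phi>"
  proof -
    have "continuous_on U \<phi>" unfolding \<phi>e
      by (intro continuous_on_sum) (use smooth_cont[OF sk, of "[]"] in simp)
    then show ?thesis using KU continuous_on_subset by blast
  qed
  have bd\<phi>: "\<forall>x\<in>frontier \<Omega>. \<forall>t\<in>{0..T}. \<phi> (x,t) = 0" using bdry by (simp add: \<phi>_def)
  have c3: "\<forall>x\<in>\<Omega>. \<forall>t\<in>{0..T}. divergence u (x,t) = 0" if init: "\<forall>x\<in>\<Omega>. divergence u (x,0) = 0"
  proof -
    have up: "\<forall>x\<in>\<Omega>. \<forall>t\<in>{0..T}. \<phi> (x,t) \<le> 0"
      apply (rule max_principle[OF op bd nu cont\<phi>])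
      using bd\<phi> apply simp
      using init apply (simp add: \<phi>_def)
      apply (intro ballI)
      apply (rule pdeD)
      apply assumption+
      done
    have pdeN: "\<exists>Dt Dx. ((\<lambda>s. - \<phi> (x, t + s)) has_real_derivative Dt) (at 0) \<and>
               Dt = \<nu> * (\<Sum>i\<in>UNIV. Dx i) \<and>
               (\<forall>i. \<exists>G e. e > 0 \<and> (\<forall>s. \<bar>s\<bar> < e \<longrightarrow>
                   ((\<lambda>r. - \<phi> (x + r *\<^sub>R axis i 1, t)) has_real_derivative G s) (at s)) \<and>
                   (G has_real_derivative Dx i) (at 0))"
      if x: "x \<in> \<Omega>" and t: "t \<in> {0<..T}" for x t
    proof -
      obtain Dt Dx where a: "((\<lambda>s. \<phi> (x, t + s)) has_real_derivative Dt) (at 0)"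
        "Dt = \<nu> * (\<Sum>i\<in>UNIV. Dx i)"
        "\<And>i. \<exists>G e. e > 0 \<and> (\<forall>s. \<bar>s\<bar> < e \<longrightarrow>
                   ((\<lambda>r. \<phi> (x + r *\<^sub>R axis i 1, t)) has_real_derivative G s) (at s)) \<and>
                   (G has_real_derivative Dx i) (at 0)"
        using pdeD[OF x t] by blast
      have "\<exists>G e. e > 0 \<and> (\<forall>s. \<bar>s\<bar> < e \<longrightarrow>
                   ((\<lambda>r. - \<phi> (x + r *\<^sub>R axis i 1, t)) has_real_derivative G s) (at s)) \<and>
                   (G has_real_derivative - Dx i) (at 0)" for i
      proof -
        obtain G e where "e > 0" "\<forall>s. \<bar>s\<bar> < e \<longrightarrow>
                   ((\<lambda>r. \<phi> (x + r *\<^sub>R axis i 1, t)) has_real_derivative G s) (at s)"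
                   "(G has_real_derivative Dx i) (at 0)" using a(3) by blast
        then show ?thesis
          by (intro exI[of _ "\<lambda>s. - G s"] exI[of _ e]) (auto intro: DERIV_minus)
      qed
      moreover have "((\<lambda>s. - \<phi> (x, t + s)) has_real_derivative - Dt) (at 0)" using a(1) by (rule DERIV_minus)
      moreover have "- Dt = \<nu> * (\<Sum>i\<in>UNIV. - Dx i)" using a(2) by (simp add: sum_negf)
      ultimately show ?thesis
        apply (intro exI[of _ "- Dt"] exI[of _ "\<lambda>i. - Dx i"])
        by simp
    qed
    have lo: "\<forall>x\<in>\<Omega>. \<forall>t\<in>{0..T}. - \<phi> (x,t) \<le> 0"
      apply (rule max_principle[OF op bd nu continuous_on_minus[OF cont\<phi>]])
      using bd\<phi> apply simp
      using init apply (simp add: \<phi>_def)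
      apply (intro ballI)
      apply (rule pdeN)
      apply assumption+
      done
    show ?thesis using up lo by (force simp: \<phi>_def)
  qed
  show ?thesis unfolding divergence_conclusion_def using c1 bdry c3 by blast
qed

theorem mainTheorem1:
  shows "(\<forall>(\<Omega> :: (real^2) set) \<nu> lam T f g n u p.
            PPE_setting curlcurl2 cross2 \<Omega> \<nu> lam T f g n u p \<longrightarrow>
            divergence_conclusion \<Omega> \<nu> T u) \<and>
         (\<forall>(\<Omega> :: (real^3) set) \<nu> lam T f g n u p.
            PPE_setting curlcurl3 cross3 \<Omega> \<nu> lam T f g n u p \<longrightarrow>
            divergence_conclusion \<Omega> \<nu> T u)"
  by (blast intro: main_generic)

end
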